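(* In the Ornstein–Uhlenbeck setting described in the context, the optimal intervention boundaries satisfy: as functions of $c_1$ (all other parameters fixed), $c_1\mapsto a^*(c_1)$ is decreasing and $c_1\mapsto b^*(c_1)$ is increasing; as functions of $c_2$ (all other parameters fixed), $c_2\mapsto a^*(c_2)$ is decreasing and $c_2\mapsto b^*(c_2)$ is increasing.
   Context: Fix parameters $r>0$, $\rho>0$, $m\in\mathbb{R}$, $\sigma>0$, $\theta\in\mathbb{R}$ and constant marginal intervention costs $c_1,c_2\in\mathbb{R}$ with $c_1+c_2>0$ (the parameters are varied only within this range). The (log-)exchange rate controlled by $\nu=\xi-\eta$ (difference of two nondecreasing adapted left-continuous processes started at $0$, with increments on disjoint sets) evolves as $dX_t=\rho(m-X_t)dt+\sigma dB_t+d\xi_t-d\eta_t$, $X_0=x\in\mathbb{R}$, where $B$ is a Brownian motion. The central bank minimizes over admissible controls $\mathbb{E}_x[\int_0^\infty e^{-rs}\tfrac12(X_s-\theta)^2ds+c_1\int_0^\infty e^{-rs}d\xi_s+c_2\int_0^\infty e^{-rs}d\eta_s]$ (jumps included). Let $D_\alpha(y)=\frac{e^{-y^2/4}}{\Gamma(-\alpha)}\int_0^\infty t^{-\alpha-1}e^{-t^2/2-yt}dt$ ($\alpha<0$), $\widehat\phi(x)=e^{\rho(x-m)^2/(2\sigma^2)}D_{-(r+\rho)/\rho}\big(\tfrac{(x-m)\sqrt{2\rho}}{\sigma}\big)$, $\widehat\psi(x)=e^{\rho(x-m)^2/(2\sigma^2)}D_{-(r+\rho)/\rho}\big(-\tfrac{(x-m)\sqrt{2\rho}}{\sigma}\big)$,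 $\widehat m'(z)=\frac{2}{\sigma^2}e^{-\rho(z-m)^2/\sigma^2}$. The optimal intervention boundaries $a^*<b^*$ are the unique pair with $a^*<\theta-(r+\rho)c_1$ and $b^*>\theta+(r+\rho)c_2$ solving $\int_a^b(z-\theta+(r+\rho)c_1)\widehat m'\widehat\phi\,dz=-(r+\rho)(c_1+c_2)\int_b^\infty\widehat m'\widehat\phi\,dz$ and $\int_a^b(z-\theta-(r+\rho)c_2)\widehat m'\widehat\psi\,dz=(r+\rho)(c_1+c_2)\int_{-\infty}^a\widehat m'\widehat\psi\,dz$; the optimal policy keeps $X$ in $[a^*,b^*]$ by minimal reflection. *)

theory Defs
  imports "HOL-Analysis.Analysis"
begin

text \<open>Parabolic cylinder function D_alpha(y) for alpha < 0 (integral representation).\<close>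
definition parab_cyl :: "real \<Rightarrow> real \<Rightarrow> real" where
  "parab_cyl \<alpha> y = exp (- (y^2) / 4) / Gamma (- \<alpha>) *
     (LBINT t=0..\<infinity>. t powr (- \<alpha> - 1) * exp (- (t^2) / 2 - y * t))"

definition phi_hat :: "real \<Rightarrow> real \<Rightarrow> real \<Rightarrow> real \<Rightarrow> real \<Rightarrow> real" where
  "phi_hat r \<rho> m \<sigma> x = exp (\<rho> * (x - m)^2 / (2 * \<sigma>^2)) *
     parab_cyl (- (r + \<rho>) / \<rho>) ((x - m) * sqrt (2 * \<rho>) / \<sigma>)"

definition psi_hat :: "real \<Rightarrow> real \<Rightarrow> real \<Rightarrow> real \<Rightarrow> real \<Rightarrow> real" where
  "psi_hat r \<rho> m \<sigma> x = exp (\<rho> * (x - m)^2 / (2 * \<sigma>^2)) *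
     parab_cyl (- (r + \<rho>) / \<rho>) (- ((x - m) * sqrt (2 * \<rho>) / \<sigma>))"

definition speed_dens :: "real \<Rightarrow> real \<Rightarrow> real \<Rightarrow> real \<Rightarrow> real" where
  "speed_dens \<rho> m \<sigma> z = 2 / \<sigma>^2 * exp (- \<rho> * (z - m)^2 / \<sigma>^2)"

text \<open>(a,b) is a pair of optimal intervention boundaries for costs c1, c2:
  the pair characterised in the paper by the two integral equations together
  with a < theta - (r+rho) c1 and b > theta + (r+rho) c2.\<close>
definition opt_boundaries ::
  "real \<Rightarrow> real \<Rightarrow> real \<Rightarrow> real \<Rightarrow> real \<Rightarrow> real \<Rightarrow> real \<Rightarrow> real \<Rightarrow> real \<Rightarrow> bool" where
  "opt_boundaries r \<rho> m \<sigma> \<theta> c1 c2 a b \<longleftrightarrow>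
     a < b \<and> a < \<theta> - (r + \<rho>) * c1 \<and> b > \<theta> + (r + \<rho>) * c2 \<and>
     (LBINT z=ereal a..ereal b. (z - \<theta> + (r + \<rho>) * c1) * speed_dens \<rho> m \<sigma> z * phi_hat r \<rho> m \<sigma> z)
       = - (r + \<rho>) * (c1 + c2) * (LBINT z=ereal b..\<infinity>. speed_dens \<rho> m \<sigma> z * phi_hat r \<rho> m \<sigma> z) \<and>
     (LBINT z=ereal a..ereal b. (z - \<theta> - (r + \<rho>) * c2) * speed_dens \<rho> m \<sigma> z * psi_hat r \<rho> m \<sigma> z)
       = (r + \<rho>) * (c1 + c2) * (LBINT z=-\<infinity>..ereal a. speed_dens \<rho> m \<sigma> z * psi_hat r \<rho> m \<sigma> z)"

end

theory Submission
  imports Defs "HOL-Probability.Distributions"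
begin

lemma ii_sum3:
  fixes f :: "real \<Rightarrow> real"
  assumes LI: "\<And>x y. interval_lebesgue_integrable lborel (ereal x) (ereal y) f"
  shows "(LBINT z=ereal a'..ereal b'. f z) = (LBINT z=ereal a'..ereal a. f z) + (LBINT z=ereal a..ereal b. f z) + (LBINT z=ereal b..ereal b'. f z)"
proof -
  have 1: "(LBINT z=ereal a'..ereal a. f z) + (LBINT z=ereal a..ereal b. f z) = (LBINT z=ereal a'..ereal b. f z)"
    by (rule interval_integral_sum) (metis LI ereal_min ereal_max)
  have 2: "(LBINT z=ereal a'..ereal b. f z) + (LBINT z=ereal b..ereal b'. f z) = (LBINT z=ereal a'..ereal b'. f z)"
    by (rule interval_integral_sum) (metis LI ereal_min ereal_max)
  show ?thesis using 1 2 by simp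
qed

lemma ii_tail_split:
  fixes f :: "real \<Rightarrow> real"
  assumes T: "\<And>x. interval_lebesgue_integrable lborel (ereal x) \<infinity> f"
  shows "(LBINT z=ereal b..\<infinity>. f z) = (LBINT z=ereal b..ereal b'. f z) + (LBINT z=ereal b'..\<infinity>. f z)"
proof -
  have "(LBINT z=ereal b..ereal b'. f z) + (LBINT z=ereal b'..\<infinity>. f z) = (LBINT z=ereal b..\<infinity>. f z)"
    by (rule interval_integral_sum) (metis T ereal_min ereal_max min_def max_def PInfty_neq_ereal(1) ereal_less_eq(1) min.absorb2 max.absorb2)
  then show ?thesis by simp
qed

lemma ii_head_split:
  fixes f :: "real \<Rightarrow> real"
  assumes T: "\<And>x. interval_lebesgue_integrable lborel (-\<infinity>) (ereal x) f"
  shows "(LBINT z=-\<infinity>..ereal a'. f z) = (LBINT z=-\<infinity>..ereal a. f z) + (LBINT z=ereal a..ereal a'. f z)"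
proof -
  have "(LBINT z=-\<infinity>..ereal a. f z) + (LBINT z=ereal a..ereal a'. f z) = (LBINT z=-\<infinity>..ereal a'. f z)"
    by (rule interval_integral_sum) (metis T ereal_min ereal_max min.absorb1 max.absorb2 MInfty_neq_ereal(1) ereal_less_eq(2) min.commute max.commute)
  then show ?thesis by simp
qed

lemma ii_pos:
  fixes f :: "real \<Rightarrow> real"
  assumes xy: "x < y" and I: "interval_lebesgue_integrable lborel (ereal x) (ereal y) f"
    and P: "\<And>z. x < z \<Longrightarrow> z < y \<Longrightarrow> f z > 0"
  shows "(LBINT z=ereal x..ereal y. f z) > 0"
proof -
  let ?g = "\<lambda>z. indicator {x<..<y} z *\<^sub>R f z"
  have eq: "(LBINT z=ereal x..ereal y. f z) = integral\<^sup>L lborel ?g"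
    using xy by (simp add: interval_lebesgue_integral_le_eq set_lebesgue_integral_def)
  have int: "integrable lborel ?g"
    using I xy by (simp add: interval_lebesgue_integrable_def set_integrable_def)
  have nn: "AE z in lborel. 0 \<le> ?g z"
    using P by (auto simp: indicator_def less_imp_le)
  have ge: "integral\<^sup>L lborel ?g \<ge> 0" using nn by (rule integral_nonneg_AE)
  moreover have "integral\<^sup>L lborel ?g \<noteq> 0"
  proof
    assume "integral\<^sup>L lborel ?g = 0"
    then have "AE z in lborel. ?g z = 0" using integral_nonneg_eq_0_iff_AE[OF int nn] by simp
    then have "AE z in lborel. z \<notin> {x<..<y}"
      by (rule AE_mp) (auto intro!: AE_I2 dest: P simp: indicator_def)
    then have "emeasure lborel {x<..<y} = 0"
      by (subst (asm) AE_iff_measurable[of "{x<..<y}"]) auto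
    then show False using xy by simp
  qed
  ultimately show ?thesis using eq by simp
qed

lemma ii_nonneg:
  fixes f :: "real \<Rightarrow> real"
  assumes xy: "x \<le> y"
    and P: "\<And>z. x < z \<Longrightarrow> z < y \<Longrightarrow> f z \<ge> 0"
  shows "(LBINT z=ereal x..ereal y. f z) \<ge> 0"
proof -
  have "(LBINT z=ereal x..ereal y. f z) = integral\<^sup>L lborel (\<lambda>z. indicator {x<..<y} z *\<^sub>R f z)"
    using xy by (simp add: interval_lebesgue_integral_le_eq set_lebesgue_integral_def)
  also have "\<dots> \<ge> 0" by (rule integral_nonneg_AE) (auto simp: indicator_def P)
  finally show ?thesis .
qed

lemma ii_compact:
  fixes f :: "real \<Rightarrow> real"
  assumes xy: "x \<le> y" and M: "f \<in> borel_measurable borel" and B: "\<And>z. x \<le> z \<Longrightarrow> z \<le> y \<Longrightarrow> \<bar>f z\<bar> \<le> B"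
  shows "interval_lebesgue_integrable lborel (ereal x) (ereal y) f"
proof -
  have "integrable lborel (\<lambda>z. indicator {x<..<y} z *\<^sub>R f z)"
    by (rule integrableI_bounded_set_indicator[where B=B]) (use M B xy in \<open>auto simp: emeasure_lborel_Ioo\<close>)
  then show ?thesis using xy by (simp add: interval_lebesgue_integrable_def set_integrable_def)
qed

lemma ii_loc:
  fixes f :: "real \<Rightarrow> real"
  assumes M: "f \<in> borel_measurable borel" and B: "\<And>x y. x \<le> y \<Longrightarrow> \<exists>B. \<forall>z. x \<le> z \<and> z \<le> y \<longrightarrow> \<bar>f z\<bar> \<le> B"
  shows "interval_lebesgue_integrable lborel (ereal x) (ereal y) f"
proof (cases "x \<le> y")
  case True
  then obtain C where "\<forall>z. x \<le> z \<and> z \<le> y \<longrightarrow> \<bar>f z\<bar> \<le> C" using B by blast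
  then show ?thesis using ii_compact[OF True M] by blast
next
  case False
  then have yx: "y \<le> x" by simp
  then obtain C where "\<forall>z. y \<le> z \<and> z \<le> x \<longrightarrow> \<bar>f z\<bar> \<le> C" using B by blast
  then show ?thesis using ii_compact[OF yx M] interval_integrable_endpoints_reverse by blast
qed

lemma ii_neg:
  fixes f :: "real \<Rightarrow> real"
  assumes xy: "x < y" and I: "interval_lebesgue_integrable lborel (ereal x) (ereal y) f"
    and P: "\<And>z. x < z \<Longrightarrow> z < y \<Longrightarrow> f z < 0"
  shows "(LBINT z=ereal x..ereal y. f z) < 0"
proof -
  have I': "interval_lebesgue_integrable lborel (ereal x) (ereal y) (\<lambda>z. - f z)"
    using interval_lebesgue_integrable_mult_right[of "-1" lborel "ereal x" "ereal y" f] I by simp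
  have "(LBINT z=ereal x..ereal y. - f z) > 0"
    by (rule ii_pos[OF xy I']) (simp add: P)
  then show ?thesis by (simp add: interval_lebesgue_integral_uminus)
qed

lemma ii_nonpos:
  fixes f :: "real \<Rightarrow> real"
  assumes xy: "x \<le> y"
    and P: "\<And>z. x < z \<Longrightarrow> z < y \<Longrightarrow> f z \<le> 0"
  shows "(LBINT z=ereal x..ereal y. f z) \<le> 0"
proof -
  have "(LBINT z=ereal x..ereal y. - f z) \<ge> 0"
    by (rule ii_nonneg[OF xy]) (simp add: P)
  then show ?thesis by (simp add: interval_lebesgue_integral_uminus)
qed

lemma lb_lin:
  fixes h :: "real \<Rightarrow> real"
  assumes B: "\<And>x y. x \<le> y \<Longrightarrow> \<exists>B. \<forall>z. x \<le> z \<and> z \<le> y \<longrightarrow> \<bar>h z\<bar> \<le> B"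
  shows "x \<le> y \<Longrightarrow> \<exists>B. \<forall>z. x \<le> z \<and> z \<le> y \<longrightarrow> \<bar>(z - c) * h z\<bar> \<le> B"
proof -
  assume xy: "x \<le> y"
  obtain C where C: "\<forall>z. x \<le> z \<and> z \<le> y \<longrightarrow> \<bar>h z\<bar> \<le> C" using B[OF xy] by blast
  show ?thesis
  proof (intro exI allI impI)
    fix z assume z: "x \<le> z \<and> z \<le> y"
    have "\<bar>(z - c) * h z\<bar> = \<bar>z - c\<bar> * \<bar>h z\<bar>" by (simp add: abs_mult)
    also have "\<dots> \<le> (\<bar>x\<bar> + \<bar>y\<bar> + \<bar>c\<bar>) * C"
      by (rule mult_mono) (use z C in auto)
    finally show "\<bar>(z - c) * h z\<bar> \<le> (\<bar>x\<bar> + \<bar>y\<bar> + \<bar>c\<bar>) * C" .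
  qed
qed

definition G1 :: "(real \<Rightarrow> real) \<Rightarrow> real \<Rightarrow> real \<Rightarrow> real \<Rightarrow> real \<Rightarrow> real" where
  "G1 w p q a b = (LBINT z=ereal a..ereal b. (z - p) * w z) + (q - p) * (LBINT z=ereal b..\<infinity>. w z)"

definition G2 :: "(real \<Rightarrow> real) \<Rightarrow> real \<Rightarrow> real \<Rightarrow> real \<Rightarrow> real \<Rightarrow> real" where
  "G2 v p q a b = (LBINT z=ereal a..ereal b. (z - q) * v z) - (q - p) * (LBINT z=-\<infinity>..ereal a. v z)"

lemma G1_diff:
  fixes w :: "real \<Rightarrow> real"
  assumes wM: "w \<in> borel_measurable borel"
    and wB: "\<And>x y. x \<le> y \<Longrightarrow> \<exists>B. \<forall>z. x \<le> z \<and> z \<le> y \<longrightarrow> \<bar>w z\<bar> \<le> B"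
    and wT: "\<And>x. interval_lebesgue_integrable lborel (ereal x) \<infinity> w"
  shows "G1 w p q a' b' - G1 w p q a b = (LBINT z=ereal a'..ereal a. (z - p) * w z) + (LBINT z=ereal b..ereal b'. (z - q) * w z)"
proof -
  have LI: "\<And>x y. interval_lebesgue_integrable lborel (ereal x) (ereal y) (\<lambda>z. (z - c) * w z)" for c
    by (rule ii_loc) (use wM in measurable, rule lb_lin[OF wB])
  have LI0: "\<And>x y. interval_lebesgue_integrable lborel (ereal x) (ereal y) w"
    by (rule ii_loc[OF wM wB])
  have s3: "(LBINT z=ereal a'..ereal b'. (z - p) * w z) = (LBINT z=ereal a'..ereal a. (z - p) * w z) + (LBINT z=ereal a..ereal b. (z - p) * w z) + (LBINT z=ereal b..ereal b'. (z - p) * w z)"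
    by (rule ii_sum3[OF LI])
  have t: "(LBINT z=ereal b..\<infinity>. w z) = (LBINT z=ereal b..ereal b'. w z) + (LBINT z=ereal b'..\<infinity>. w z)"
    by (rule ii_tail_split[OF wT])
  have "(LBINT z=ereal b..ereal b'. (z - q) * w z) = (LBINT z=ereal b..ereal b'. ((z - p) * w z - (q - p) * w z))"
    by (simp add: algebra_simps)
  also have "\<dots> = (LBINT z=ereal b..ereal b'. (z - p) * w z) - (q - p) * (LBINT z=ereal b..ereal b'. w z)"
    by (subst interval_lebesgue_integral_diff(2)) (auto intro: LI LI0)
  finally have e: "(LBINT z=ereal b..ereal b'. (z - q) * w z) = (LBINT z=ereal b..ereal b'. (z - p) * w z) - (q - p) * (LBINT z=ereal b..ereal b'. w z)" .
  show ?thesis unfolding G1_def using s3 t e by (simp add: algebra_simps)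
qed

lemma G2_diff:
  fixes v :: "real \<Rightarrow> real"
  assumes vM: "v \<in> borel_measurable borel"
    and vB: "\<And>x y. x \<le> y \<Longrightarrow> \<exists>B. \<forall>z. x \<le> z \<and> z \<le> y \<longrightarrow> \<bar>v z\<bar> \<le> B"
    and vT: "\<And>x. interval_lebesgue_integrable lborel (-\<infinity>) (ereal x) v"
  shows "G2 v p q a' b' - G2 v p q a b = (LBINT z=ereal a'..ereal a. (z - p) * v z) + (LBINT z=ereal b..ereal b'. (z - q) * v z)"
proof -
  have LI: "\<And>x y. interval_lebesgue_integrable lborel (ereal x) (ereal y) (\<lambda>z. (z - c) * v z)" for c
    by (rule ii_loc) (use vM in measurable, rule lb_lin[OF vB])
  have LI0: "\<And>x y. interval_lebesgue_integrable lborel (ereal x) (ereal y) v"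
    by (rule ii_loc[OF vM vB])
  have s3: "(LBINT z=ereal a'..ereal b'. (z - q) * v z) = (LBINT z=ereal a'..ereal a. (z - q) * v z) + (LBINT z=ereal a..ereal b. (z - q) * v z) + (LBINT z=ereal b..ereal b'. (z - q) * v z)"
    by (rule ii_sum3[OF LI])
  have t: "(LBINT z=-\<infinity>..ereal a'. v z) = (LBINT z=-\<infinity>..ereal a. v z) + (LBINT z=ereal a..ereal a'. v z)"
    by (rule ii_head_split[OF vT])
  have r: "(LBINT z=ereal a..ereal a'. v z) = - (LBINT z=ereal a'..ereal a. v z)"
    by (rule interval_integral_endpoints_reverse)
  have "(LBINT z=ereal a'..ereal a. (z - p) * v z) = (LBINT z=ereal a'..ereal a. ((z - q) * v z + (q - p) * v z))"
    by (simp add: algebra_simps)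
  also have "\<dots> = (LBINT z=ereal a'..ereal a. (z - q) * v z) + (q - p) * (LBINT z=ereal a'..ereal a. v z)"
    by (subst interval_lebesgue_integral_add(2)) (auto intro: LI LI0)
  finally have e: "(LBINT z=ereal a'..ereal a. (z - p) * v z) = (LBINT z=ereal a'..ereal a. (z - q) * v z) + (q - p) * (LBINT z=ereal a'..ereal a. v z)" .
  have t2: "(q - p) * (LBINT z=-\<infinity>..ereal a'. v z) = (q - p) * (LBINT z=-\<infinity>..ereal a. v z) - (q - p) * (LBINT z=ereal a'..ereal a. v z)"
  proof -
    have "(LBINT z=-\<infinity>..ereal a'. v z) = (LBINT z=-\<infinity>..ereal a. v z) - (LBINT z=ereal a'..ereal a. v z)"
      using t r by linarith
    then show ?thesis by (simp add: right_diff_distrib)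
  qed
  show ?thesis unfolding G2_def using s3 e t2 by linarith
qed

lemma core_compare:
  fixes w v :: "real \<Rightarrow> real"
  assumes wM: "w \<in> borel_measurable borel" and vM: "v \<in> borel_measurable borel"
    and wpos: "\<And>z. w z > 0" and vpos: "\<And>z. v z > 0"
    and wB: "\<And>x y. x \<le> y \<Longrightarrow> \<exists>B. \<forall>z. x \<le> z \<and> z \<le> y \<longrightarrow> \<bar>w z\<bar> \<le> B"
    and vB: "\<And>x y. x \<le> y \<Longrightarrow> \<exists>B. \<forall>z. x \<le> z \<and> z \<le> y \<longrightarrow> \<bar>v z\<bar> \<le> B"
    and wT: "\<And>x. interval_lebesgue_integrable lborel (ereal x) \<infinity> w"
    and vT: "\<And>x. interval_lebesgue_integrable lborel (-\<infinity>) (ereal x) v"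
    and ratio: "\<And>z1 z2. z1 < z2 \<Longrightarrow> v z1 * w z2 < v z2 * w z1"
    and pq: "p < q" and ap: "a < p" and a'p: "a' < p" and qb: "q < b" and qb': "q < b'"
    and e1: "G1 w p q a b = 0" and e2: "G2 v p q a b = 0"
    and e1': "G1 w p q a' b' \<le> 0" and e2': "G2 v p q a' b' \<ge> 0"
  shows "a' \<le> a \<and> b \<le> b'"
proof -
  have LIw: "\<And>x y. interval_lebesgue_integrable lborel (ereal x) (ereal y) (\<lambda>z. (z - c) * w z)" for c
    by (rule ii_loc) (use wM in measurable, rule lb_lin[OF wB])
  have LIv: "\<And>x y. interval_lebesgue_integrable lborel (ereal x) (ereal y) (\<lambda>z. (z - c) * v z)" for c
    by (rule ii_loc) (use vM in measurable, rule lb_lin[OF vB])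
  have d1: "G1 w p q a' b' = (LBINT z=ereal a'..ereal a. (z - p) * w z) + (LBINT z=ereal b..ereal b'. (z - q) * w z)"
    using G1_diff[OF wM wB wT, of p q a' b' a b] e1 by simp
  have d2: "G2 v p q a' b' = (LBINT z=ereal a'..ereal a. (z - p) * v z) + (LBINT z=ereal b..ereal b'. (z - q) * v z)"
    using G2_diff[OF vM vB vT, of p q a' b' a b] e2 by simp
  show ?thesis
  proof (rule ccontr)
    assume "\<not> (a' \<le> a \<and> b \<le> b')"
    then consider (A) "a < a'" "b \<le> b'" | (B) "a' \<le> a" "b' < b" | (C) "a < a'" "b' < b" by linarith
    then show False
    proof cases
      case A
      have "(LBINT z=ereal a..ereal a'. (z - p) * w z) < 0"
        by (rule ii_neg[OF A(1) LIw]) (use a'p wpos in \<open>auto intro: mult_neg_pos\<close>)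
      then have "(LBINT z=ereal a'..ereal a. (z - p) * w z) > 0"
        by (subst interval_integral_endpoints_reverse) simp
      moreover have "(LBINT z=ereal b..ereal b'. (z - q) * w z) \<ge> 0"
        by (rule ii_nonneg[OF A(2)]) (use qb wpos in \<open>auto intro: less_imp_le\<close>)
      ultimately show False using d1 e1' by linarith
    next
      case B
      have "(LBINT z=ereal a'..ereal a. (z - p) * v z) \<le> 0"
        proof (rule ii_nonpos[OF B(1)])
        fix z assume "a' < z" "z < a"
        then have "z - p \<le> 0" using ap by simp
        then show "(z - p) * v z \<le> 0" using vpos[of z] by (simp add: mult_nonpos_nonneg)
      qed
      moreover have "(LBINT z=ereal b'..ereal b. (z - q) * v z) > 0"
        by (rule ii_pos[OF B(2) LIv]) (use qb' vpos in auto)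
      then have "(LBINT z=ereal b..ereal b'. (z - q) * v z) < 0"
        by (subst interval_integral_endpoints_reverse) simp
      ultimately show False using d2 e2' by linarith
    next
      case C
      define R where "R = v a' / w a'"
      have R0: "R > 0" unfolding R_def using wpos vpos by simp
      define I1 where "I1 = (LBINT z=ereal a..ereal a'. (z - p) * w z)"
      define I2 where "I2 = (LBINT z=ereal a..ereal a'. (z - p) * v z)"
      define J1 where "J1 = (LBINT z=ereal b'..ereal b. (z - q) * w z)"
      define J2 where "J2 = (LBINT z=ereal b'..ereal b. (z - q) * v z)"
      have g1: "- I1 - J1 \<le> 0" using d1 e1' unfolding I1_def J1_def
        by (simp add: interval_integral_endpoints_reverse[of _ "ereal a'"] interval_integral_endpoints_reverse[of _ "ereal b"])
      have g2: "- I2 - J2 \<ge> 0" using d2 e2' unfolding I2_def J2_def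
        by (simp add: interval_integral_endpoints_reverse[of _ "ereal a'"] interval_integral_endpoints_reverse[of _ "ereal b"])
      have s1: "(LBINT z=ereal a..ereal a'. (R * ((z - p) * w z) - (z - p) * v z)) < 0"
      proof (rule ii_neg[OF C(1)])
        show "interval_lebesgue_integrable lborel (ereal a) (ereal a') (\<lambda>z. R * ((z - p) * w z) - (z - p) * v z)"
          using LIw LIv by auto
        fix z assume z: "a < z" "z < a'"
        have "v z * w a' < v a' * w z" using ratio[OF z(2)] .
        then have "R * w z - v z > 0" unfolding R_def using wpos[of a']
          by (simp add: field_simps)
        moreover have "z - p < 0" using z a'p by simp
        ultimately have "(z - p) * (R * w z - v z) < 0" by (simp add: mult_neg_pos)
        then show "R * ((z - p) * w z) - (z - p) * v z < 0" by (simp add: algebra_simps)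
      qed
      then have s1': "R * I1 - I2 < 0" unfolding I1_def I2_def
        by (subst (asm) interval_lebesgue_integral_diff(2)) (use LIw LIv in auto)
      have s2: "(LBINT z=ereal b'..ereal b. ((z - q) * v z - R * ((z - q) * w z))) \<ge> 0"
      proof (rule ii_nonneg)
        show "b' \<le> b" using C by simp
        fix z assume z: "b' < z" "z < b"
        have "a' < z" using z a'p pq qb' by simp
        then have "v a' * w z < v z * w a'" using ratio by blast
        then have "v z - R * w z > 0" unfolding R_def using wpos[of a']
          by (simp add: field_simps)
        moreover have "z - q > 0" using z qb' by simp
        ultimately have "(z - q) * (v z - R * w z) \<ge> 0" by simp
        then show "(z - q) * v z - R * ((z - q) * w z) \<ge> 0" by (simp add: algebra_simps)
      qed
      then have s2': "J2 - R * J1 \<ge> 0" unfolding J1_def J2_def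
        by (subst (asm) interval_lebesgue_integral_diff(2)) (use LIw LIv in auto)
      have "- R * I1 \<le> R * J1" using g1 R0 by (metis add.inverse_inverse diff_le_0_iff_le minus_diff_eq mult_left_mono less_imp_le mult_minus_right neg_le_iff_le mult_minus_left)
      then show False using s1' s2' g2 by linarith
    qed
  qed
qed

definition Ipc :: "real \<Rightarrow> real \<Rightarrow> real" where
  "Ipc e y = (LBINT t=0..\<infinity>. t powr e * exp (- (t^2) / 2 - y * t))"

lemma ii_pos_inf:
  fixes f :: "real \<Rightarrow> real"
  assumes I: "interval_lebesgue_integrable lborel 0 \<infinity> f"
    and P: "\<And>z. 0 < z \<Longrightarrow> f z > 0"
  shows "(LBINT z=0..\<infinity>. f z) > 0"
proof -
  let ?g = "\<lambda>z. indicator {0<..} z *\<^sub>R f z"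
  have ei: "einterval 0 \<infinity> = {0<..}" by (auto simp: einterval_def zero_ereal_def)
  have eq: "(LBINT z=0..\<infinity>. f z) = integral\<^sup>L lborel ?g"
    by (simp add: interval_lebesgue_integral_le_eq set_lebesgue_integral_def ei)
  have int: "integrable lborel ?g"
    using I by (simp add: interval_lebesgue_integrable_def set_integrable_def ei)
  have nn: "AE z in lborel. 0 \<le> ?g z"
    using P by (auto simp: indicator_def less_imp_le)
  have ge: "integral\<^sup>L lborel ?g \<ge> 0" using nn by (rule integral_nonneg_AE)
  moreover have "integral\<^sup>L lborel ?g \<noteq> 0"
  proof
    assume "integral\<^sup>L lborel ?g = 0"
    then have "AE z in lborel. ?g z = 0" using integral_nonneg_eq_0_iff_AE[OF int nn] by simp
    then have "AE z in lborel. z \<notin> {0<..<1::real}"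
      by (rule AE_mp) (auto intro!: AE_I2 dest: P simp: indicator_def)
    then have "emeasure lborel {0<..<1::real} = 0"
      by (subst (asm) AE_iff_measurable[of "{0<..<1}"]) auto
    then show False by simp
  qed
  ultimately show ?thesis using eq by simp
qed

lemma Ipc_int:
  assumes e: "e \<ge> 0"
  shows "interval_lebesgue_integrable lborel 0 \<infinity> (\<lambda>t. t powr e * exp (- (t^2) / 2 - y * t))"
proof -
  have ei: "einterval 0 \<infinity> = {0<..}" by (auto simp: einterval_def zero_ereal_def)
  define C where "C = exp ((1 - y)^2 / 2)"
  let ?h = "\<lambda>t::real. indicator {0..} t * t powr (e + 1 - 1) / exp t"
  have hM: "?h \<in> borel_measurable borel" by measurable
  have "integrable lborel ?h"
  proof (rule integrableI_nonneg)
    show "?h \<in> borel_measurable lborel" using hM by simp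
    show "AE x in lborel. 0 \<le> ?h x" by (auto simp: indicator_def)
    have "(\<integral>\<^sup>+ x. ennreal (?h x) \<partial>lborel) = ennreal (Gamma (e + 1))"
      using Gamma_conv_nn_integral_real[of "e+1"] e by simp
    then show "(\<integral>\<^sup>+ x. ennreal (?h x) \<partial>lborel) < \<infinity>" by simp
  qed
  then have hI: "integrable lborel (\<lambda>t. C * ?h t)" by (rule integrable_mult_right)
  have "integrable lborel (\<lambda>t. indicator {0<..} t *\<^sub>R (t powr e * exp (- (t^2) / 2 - y * t)))"
  proof (rule Bochner_Integration.integrable_bound[OF hI])
    show "(\<lambda>t. indicator {0<..} t *\<^sub>R (t powr e * exp (- (t^2) / 2 - y * t))) \<in> borel_measurable lborel"
      by measurable
    show "AE x in lborel. norm (indicator {0<..} x *\<^sub>R (x powr e * exp (- (x^2) / 2 - y * x))) \<le> norm (C * ?h x)"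
    proof (rule AE_I2)
      fix t :: real
      show "norm (indicator {0<..} t *\<^sub>R (t powr e * exp (- (t^2) / 2 - y * t))) \<le> norm (C * ?h t)"
      proof (cases "t > 0")
        case True
        have sq: "0 \<le> ((1 - y) - t)^2" by simp
        have "- (t^2) / 2 - y * t + t \<le> (1 - y)^2 / 2" using sq by (simp add: power2_eq_square algebra_simps)
        then have "exp (- (t^2) / 2 - y * t + t) \<le> C" unfolding C_def by simp
        then have "exp (- (t^2) / 2 - y * t) \<le> C / exp t"
          by (simp add: exp_add pos_le_divide_eq)
        then have "t powr e * exp (- (t^2) / 2 - y * t) \<le> t powr e * (C / exp t)"
          by (rule mult_left_mono) simp
        moreover have eqh: "C * ?h t = t powr e * (C / exp t)" using True by simp
        moreover have nnh: "C * ?h t \<ge> 0" unfolding C_def using True by simp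
        moreover have L: "norm (indicator {0<..} t *\<^sub>R (t powr e * exp (- (t^2) / 2 - y * t))) = t powr e * exp (- (t^2) / 2 - y * t)"
          using True by simp
        moreover have Rr: "norm (C * ?h t) = C * ?h t" by (simp only: real_norm_def abs_of_nonneg[OF nnh])
        ultimately show ?thesis by (simp only: L Rr eqh)
      next
        case False
        then show ?thesis unfolding C_def by (simp add: indicator_def)
      qed
    qed
  qed
  then show ?thesis by (simp add: interval_lebesgue_integrable_def set_integrable_def ei)
qed

lemma Ipc_pos: "e \<ge> 0 \<Longrightarrow> Ipc e y > 0"
  unfolding Ipc_def by (rule ii_pos_inf[OF Ipc_int]) auto

lemma Ipc_strict_anti:
  assumes e: "e \<ge> 0" and y: "y1 < y2"
  shows "Ipc e y2 < Ipc e y1"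
proof -
  have "(LBINT t=0..\<infinity>. (t powr e * exp (- (t^2) / 2 - y1 * t) - t powr e * exp (- (t^2) / 2 - y2 * t))) > 0"
  proof (rule ii_pos_inf)
    show "interval_lebesgue_integrable lborel 0 \<infinity> (\<lambda>t. t powr e * exp (- (t^2) / 2 - y1 * t) - t powr e * exp (- (t^2) / 2 - y2 * t))"
      using Ipc_int[OF e] by auto
    fix t :: real assume t: "0 < t"
    have "y1 * t < y2 * t" using y t by simp
    then have "exp (- (t^2) / 2 - y2 * t) < exp (- (t^2) / 2 - y1 * t)" by simp
    then show "t powr e * exp (- (t^2) / 2 - y1 * t) - t powr e * exp (- (t^2) / 2 - y2 * t) > 0"
      using t by simp
  qed
  then show ?thesis unfolding Ipc_def
    by (subst (asm) interval_lebesgue_integral_diff(2)) (use Ipc_int[OF e] in auto)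
qed

lemma ii_nonneg_e:
  fixes f :: "real \<Rightarrow> real"
  assumes ab: "a \<le> b" and P: "\<And>z. f z \<ge> 0"
  shows "(LBINT z=a..b. f z) \<ge> 0"
proof -
  have "(LBINT z=a..b. f z) = integral\<^sup>L lborel (\<lambda>z. indicator (einterval a b) z *\<^sub>R f z)"
    using ab by (simp add: interval_lebesgue_integral_le_eq set_lebesgue_integral_def)
  also have "\<dots> \<ge> 0" by (rule integral_nonneg_AE) (auto simp: indicator_def P)
  finally show ?thesis .
qed

lemma G1_p:
  fixes w :: "real \<Rightarrow> real"
  assumes LI0: "interval_lebesgue_integrable lborel (ereal a) (ereal b) w"
    and LI1: "interval_lebesgue_integrable lborel (ereal a) (ereal b) (\<lambda>z. (z - p) * w z)"
    and wnn: "\<And>z. w z \<ge> 0" and pp: "p' \<le> p" and ab: "a \<le> b"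
  shows "G1 w p q a b \<le> G1 w p' q a b"
proof -
  have "(LBINT z=ereal a..ereal b. (z - p') * w z) = (LBINT z=ereal a..ereal b. ((z - p) * w z + (p - p') * w z))"
    by (simp add: algebra_simps)
  also have "\<dots> = (LBINT z=ereal a..ereal b. (z - p) * w z) + (p - p') * (LBINT z=ereal a..ereal b. w z)"
    by (subst interval_lebesgue_integral_add(2)) (auto intro: LI0 LI1)
  finally have e: "(LBINT z=ereal a..ereal b. (z - p') * w z) = (LBINT z=ereal a..ereal b. (z - p) * w z) + (p - p') * (LBINT z=ereal a..ereal b. w z)" .
  have i0: "(LBINT z=ereal a..ereal b. w z) \<ge> 0" by (rule ii_nonneg_e) (use ab wnn in auto)
  have t0: "(LBINT z=ereal b..\<infinity>. w z) \<ge> 0" by (rule ii_nonneg_e) (use wnn in auto)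
  have "(p - p') * (LBINT z=ereal a..ereal b. w z) \<ge> 0" using i0 pp by simp
  moreover have "(q - p') * (LBINT z=ereal b..\<infinity>. w z) - (q - p) * (LBINT z=ereal b..\<infinity>. w z) = (p - p') * (LBINT z=ereal b..\<infinity>. w z)"
    by (simp add: algebra_simps)
  moreover have "(p - p') * (LBINT z=ereal b..\<infinity>. w z) \<ge> 0" using t0 pp by simp
  ultimately show ?thesis unfolding G1_def using e by linarith
qed

lemma G2_p:
  fixes v :: "real \<Rightarrow> real"
  assumes vnn: "\<And>z. v z \<ge> 0" and pp: "p' \<le> p"
  shows "G2 v p' q a b \<le> G2 v p q a b"
proof -
  have t0: "(LBINT z=-\<infinity>..ereal a. v z) \<ge> 0" by (rule ii_nonneg_e) (use vnn in auto)
  have "(q - p') * (LBINT z=-\<infinity>..ereal a. v z) - (q - p) * (LBINT z=-\<infinity>..ereal a. v z) = (p - p') * (LBINT z=-\<infinity>..ereal a. v z)"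
    by (simp add: algebra_simps)
  moreover have "(p - p') * (LBINT z=-\<infinity>..ereal a. v z) \<ge> 0" using t0 pp by simp
  ultimately show ?thesis unfolding G2_def by linarith
qed

lemma G1_q:
  fixes w :: "real \<Rightarrow> real"
  assumes wnn: "\<And>z. w z \<ge> 0" and qq: "q \<le> q'"
  shows "G1 w p q a b \<le> G1 w p q' a b"
proof -
  have t0: "(LBINT z=ereal b..\<infinity>. w z) \<ge> 0" by (rule ii_nonneg_e) (use wnn in auto)
  have "(q' - p) * (LBINT z=ereal b..\<infinity>. w z) - (q - p) * (LBINT z=ereal b..\<infinity>. w z) = (q' - q) * (LBINT z=ereal b..\<infinity>. w z)"
    by (simp add: algebra_simps)
  moreover have "(q' - q) * (LBINT z=ereal b..\<infinity>. w z) \<ge> 0" using t0 qq by simp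
  ultimately show ?thesis unfolding G1_def by linarith
qed

lemma G2_q:
  fixes v :: "real \<Rightarrow> real"
  assumes LI0: "interval_lebesgue_integrable lborel (ereal a) (ereal b) v"
    and LI1: "interval_lebesgue_integrable lborel (ereal a) (ereal b) (\<lambda>z. (z - q') * v z)"
    and vnn: "\<And>z. v z \<ge> 0" and qq: "q \<le> q'" and ab: "a \<le> b"
  shows "G2 v p q' a b \<le> G2 v p q a b"
proof -
  have "(LBINT z=ereal a..ereal b. (z - q) * v z) = (LBINT z=ereal a..ereal b. ((z - q') * v z + (q' - q) * v z))"
    by (simp add: algebra_simps)
  also have "\<dots> = (LBINT z=ereal a..ereal b. (z - q') * v z) + (q' - q) * (LBINT z=ereal a..ereal b. v z)"
    by (subst interval_lebesgue_integral_add(2)) (auto intro: LI0 LI1)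
  finally have e: "(LBINT z=ereal a..ereal b. (z - q) * v z) = (LBINT z=ereal a..ereal b. (z - q') * v z) + (q' - q) * (LBINT z=ereal a..ereal b. v z)" .
  have i0: "(LBINT z=ereal a..ereal b. v z) \<ge> 0" by (rule ii_nonneg_e) (use ab vnn in auto)
  have t0: "(LBINT z=-\<infinity>..ereal a. v z) \<ge> 0" by (rule ii_nonneg_e) (use vnn in auto)
  have "(q' - q) * (LBINT z=ereal a..ereal b. v z) \<ge> 0" using i0 qq by simp
  moreover have "(q' - p) * (LBINT z=-\<infinity>..ereal a. v z) - (q - p) * (LBINT z=-\<infinity>..ereal a. v z) = (q' - q) * (LBINT z=-\<infinity>..ereal a. v z)"
    by (simp add: algebra_simps)
  moreover have "(q' - q) * (LBINT z=-\<infinity>..ereal a. v z) \<ge> 0" using t0 qq by simp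
  ultimately show ?thesis unfolding G2_def using e by linarith
qed

lemma aux_exp1: "ea * eb = 1 \<Longrightarrow> ea * (eb / G * I) = I / (G::real)"
proof -
  assume h: "ea * eb = 1"
  have "ea * (eb / G * I) = (ea * eb) * I / G" by simp
  then show ?thesis using h by simp
qed

lemma phi_eq:
  assumes rho: "\<rho> > 0" and sig: "\<sigma> > 0"
  shows "phi_hat r \<rho> m \<sigma> x = Ipc ((r + \<rho>) / \<rho> - 1) ((x - m) * sqrt (2 * \<rho>) / \<sigma>) / Gamma ((r + \<rho>) / \<rho>)"
    and "psi_hat r \<rho> m \<sigma> x = Ipc ((r + \<rho>) / \<rho> - 1) (- ((x - m) * sqrt (2 * \<rho>) / \<sigma>)) / Gamma ((r + \<rho>) / \<rho>)"
proof -
  have k: "\<rho> * (x - m)^2 / (2 * \<sigma>^2) = ((x - m) * sqrt (2 * \<rho>) / \<sigma>)^2 / 4"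
  proof -
    have s: "(sqrt (2 * \<rho>))^2 = 2 * \<rho>" using rho by simp
    have "((x - m) * sqrt (2 * \<rho>) / \<sigma>)^2 = (x - m)^2 * (2 * \<rho>) / \<sigma>^2"
      by (simp only: power_mult_distrib power_divide s)
    then show ?thesis using sig by (simp add: field_simps)
  qed
  have one: "exp (\<rho> * (x - m)^2 / (2 * \<sigma>^2)) * exp (- (((x - m) * sqrt (2 * \<rho>) / \<sigma>)^2) / 4) = 1"
    by (simp add: k exp_minus field_simps)
  have one': "exp (\<rho> * (x - m)^2 / (2 * \<sigma>^2)) * exp (- ((- ((x - m) * sqrt (2 * \<rho>) / \<sigma>))^2) / 4) = 1"
    using one by simp
  have neg: "- (- (r + \<rho>) / \<rho>) = (r + \<rho>) / \<rho>" by (simp only: minus_divide_left minus_minus)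
  show "phi_hat r \<rho> m \<sigma> x = Ipc ((r + \<rho>) / \<rho> - 1) ((x - m) * sqrt (2 * \<rho>) / \<sigma>) / Gamma ((r + \<rho>) / \<rho>)"
    unfolding phi_hat_def parab_cyl_def Ipc_def neg by (rule aux_exp1[OF one])
  show "psi_hat r \<rho> m \<sigma> x = Ipc ((r + \<rho>) / \<rho> - 1) (- ((x - m) * sqrt (2 * \<rho>) / \<sigma>)) / Gamma ((r + \<rho>) / \<rho>)"
    unfolding psi_hat_def parab_cyl_def Ipc_def neg by (rule aux_exp1[OF one'])
qed

context
  fixes r \<rho> m \<sigma> :: real
  assumes r0: "r > 0" and rho: "\<rho> > 0" and sig: "\<sigma> > 0"
begin

lemma e_nonneg: "(r + \<rho>) / \<rho> - 1 \<ge> 0"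
  using r0 rho by (simp add: field_simps)

lemma y_mono: "x1 < x2 \<Longrightarrow> (x1 - m) * sqrt (2 * \<rho>) / \<sigma> < (x2 - m) * sqrt (2 * \<rho>) / \<sigma>"
  using rho sig by (intro divide_strict_right_mono mult_strict_right_mono) auto

lemma phi_pos: "phi_hat r \<rho> m \<sigma> x > 0"
  using phi_eq(1)[OF rho sig] Ipc_pos[OF e_nonneg] rho r0 by simp

lemma psi_pos: "psi_hat r \<rho> m \<sigma> x > 0"
  using phi_eq(2)[OF rho sig] Ipc_pos[OF e_nonneg] rho r0 by simp

lemma phi_anti: "x1 < x2 \<Longrightarrow> phi_hat r \<rho> m \<sigma> x2 < phi_hat r \<rho> m \<sigma> x1"
  unfolding phi_eq(1)[OF rho sig]
  by (rule divide_strict_right_mono[OF Ipc_strict_anti[OF e_nonneg y_mono]]) (use rho r0 in auto)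

lemma psi_mono: "x1 < x2 \<Longrightarrow> psi_hat r \<rho> m \<sigma> x1 < psi_hat r \<rho> m \<sigma> x2"
  unfolding phi_eq(2)[OF rho sig]
  by (rule divide_strict_right_mono[OF Ipc_strict_anti[OF e_nonneg]]) (use rho r0 y_mono in auto)

lemma phi_le: "x1 \<le> x2 \<Longrightarrow> phi_hat r \<rho> m \<sigma> x2 \<le> phi_hat r \<rho> m \<sigma> x1"
  using phi_anti by (cases "x1 = x2") (auto simp: less_imp_le)

lemma psi_le: "x1 \<le> x2 \<Longrightarrow> psi_hat r \<rho> m \<sigma> x1 \<le> psi_hat r \<rho> m \<sigma> x2"
  using psi_mono by (cases "x1 = x2") (auto simp: less_imp_le)

lemma phi_meas[measurable]: "phi_hat r \<rho> m \<sigma> \<in> borel_measurable borel"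
proof -
  have "mono (\<lambda>x. - phi_hat r \<rho> m \<sigma> x)" by (auto simp: mono_def intro: phi_le)
  then have "(\<lambda>x. - phi_hat r \<rho> m \<sigma> x) \<in> borel_measurable borel" by (rule borel_measurable_mono)
  then have "(\<lambda>x. - (- phi_hat r \<rho> m \<sigma> x)) \<in> borel_measurable borel" by measurable
  then show ?thesis by simp
qed

lemma psi_meas[measurable]: "psi_hat r \<rho> m \<sigma> \<in> borel_measurable borel"
proof -
  have "mono (psi_hat r \<rho> m \<sigma>)" by (auto simp: mono_def intro: psi_le)
  then show ?thesis by (rule borel_measurable_mono)
qed

lemma sd_pos: "speed_dens \<rho> m \<sigma> z > 0"
  unfolding speed_dens_def using sig by simp

lemma sd_le: "speed_dens \<rho> m \<sigma> z \<le> 2 / \<sigma>^2"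
proof -
  have "- \<rho> * (z - m)^2 / \<sigma>^2 \<le> 0" using rho sig by (simp add: divide_nonpos_pos mult_nonpos_nonneg)
  then have E: "exp (- \<rho> * (z - m)^2 / \<sigma>^2) \<le> 1" by simp
  have "2 / \<sigma>^2 * exp (- \<rho> * (z - m)^2 / \<sigma>^2) \<le> 2 / \<sigma>^2 * 1"
    by (rule mult_left_mono[OF E]) simp
  then show ?thesis unfolding speed_dens_def by simp
qed

lemma sd_meas[measurable]: "speed_dens \<rho> m \<sigma> \<in> borel_measurable borel"
  unfolding speed_dens_def by measurable

lemma sd_int: "integrable lborel (speed_dens \<rho> m \<sigma>)"
proof -
  define tt where "tt = \<sigma> / sqrt (2 * \<rho>)"
  have t2: "tt^2 = \<sigma>^2 / (2 * \<rho>)" unfolding tt_def using rho by (simp add: power_divide)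
  have tp: "tt > 0" unfolding tt_def using rho sig by simp
  define K where "K = 2 / \<sigma>^2 * sqrt (2 * pi * tt^2)"
  have "speed_dens \<rho> m \<sigma> z = K * normal_density m tt z" for z
  proof -
    have "(- ((z - m)^2)) / (2 * tt^2) = - \<rho> * (z - m)^2 / \<sigma>^2" using t2 tp rho sig by (simp add: field_simps)
    moreover have "sqrt (2 * pi * tt^2) > 0" using tp by simp
    ultimately show ?thesis unfolding speed_dens_def normal_density_def K_def using tp by (simp add: field_simps)
  qed
  then have eq: "speed_dens \<rho> m \<sigma> = (\<lambda>z. K * normal_density m tt z)" by auto
  have "integrable lborel (\<lambda>z. K * normal_density m tt z)"
    by (rule Bochner_Integration.integrable_mult_right) (rule Distributions.integrable_normal_density, rule tp)
  then show ?thesis using eq by simp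
qed

abbreviation "ww \<equiv> (\<lambda>z. speed_dens \<rho> m \<sigma> z * phi_hat r \<rho> m \<sigma> z)"
abbreviation "vv \<equiv> (\<lambda>z. speed_dens \<rho> m \<sigma> z * psi_hat r \<rho> m \<sigma> z)"

lemma ww_meas: "ww \<in> borel_measurable borel" by measurable
lemma vv_meas: "vv \<in> borel_measurable borel" by measurable
lemma ww_pos: "ww z > 0" using sd_pos phi_pos by simp
lemma vv_pos: "vv z > 0" using sd_pos psi_pos by simp

lemma ww_B: "x \<le> y \<Longrightarrow> \<exists>B. \<forall>z. x \<le> z \<and> z \<le> y \<longrightarrow> \<bar>ww z\<bar> \<le> B"
proof (intro exI allI impI)
  fix z assume "x \<le> z \<and> z \<le> y"
  then have "phi_hat r \<rho> m \<sigma> z \<le> phi_hat r \<rho> m \<sigma> x" using phi_le by auto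
  then have "ww z \<le> 2 / \<sigma>^2 * phi_hat r \<rho> m \<sigma> x"
    using sd_le[of z] phi_pos[of z] sd_pos[of z] by (intro mult_mono) auto
  then show "\<bar>ww z\<bar> \<le> 2 / \<sigma>^2 * phi_hat r \<rho> m \<sigma> x" using ww_pos[of z] by simp
qed

lemma vv_B: "x \<le> y \<Longrightarrow> \<exists>B. \<forall>z. x \<le> z \<and> z \<le> y \<longrightarrow> \<bar>vv z\<bar> \<le> B"
proof (intro exI allI impI)
  fix z assume "x \<le> z \<and> z \<le> y"
  then have "psi_hat r \<rho> m \<sigma> z \<le> psi_hat r \<rho> m \<sigma> y" using psi_le by auto
  then have "vv z \<le> 2 / \<sigma>^2 * psi_hat r \<rho> m \<sigma> y"
    using sd_le[of z] psi_pos[of z] sd_pos[of z] by (intro mult_mono) auto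
  then show "\<bar>vv z\<bar> \<le> 2 / \<sigma>^2 * psi_hat r \<rho> m \<sigma> y" using vv_pos[of z] by simp
qed

lemma ww_T: "interval_lebesgue_integrable lborel (ereal x) \<infinity> ww"
proof -
  have "integrable lborel (\<lambda>z. indicator {x<..} z *\<^sub>R ww z)"
  proof (rule Bochner_Integration.integrable_bound)
    show "integrable lborel (\<lambda>z. phi_hat r \<rho> m \<sigma> x * speed_dens \<rho> m \<sigma> z)"
      using sd_int by (rule integrable_mult_right)
    show "(\<lambda>z. indicator {x<..} z *\<^sub>R ww z) \<in> borel_measurable lborel" by measurable
    show "AE z in lborel. norm (indicator {x<..} z *\<^sub>R ww z) \<le> norm (phi_hat r \<rho> m \<sigma> x * speed_dens \<rho> m \<sigma> z)"
    proof (rule AE_I2)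
      fix z
      have "indicator {x<..} z * ww z \<le> phi_hat r \<rho> m \<sigma> x * speed_dens \<rho> m \<sigma> z"
      proof (cases "x < z")
        case True
        then have "phi_hat r \<rho> m \<sigma> z \<le> phi_hat r \<rho> m \<sigma> x" using phi_le by auto
        then show ?thesis using True sd_pos[of z] by (simp add: mult.commute)
      next
        case False
        then show ?thesis using sd_pos[of z] phi_pos[of x] by simp
      qed
      then show "norm (indicator {x<..} z *\<^sub>R ww z) \<le> norm (phi_hat r \<rho> m \<sigma> x * speed_dens \<rho> m \<sigma> z)"
        using ww_pos[of z] sd_pos[of z] phi_pos[of x] by (simp add: indicator_def)
    qed
  qed
  then show ?thesis by (simp add: interval_integrable_to_infinity_eq set_integrable_def)
qed

lemma vv_T: "interval_lebesgue_integrable lborel (-\<infinity>) (ereal x) vv"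
proof -
  have ei: "einterval (-\<infinity>) (ereal x) = {..<x}" by (auto simp: einterval_def)
  have "integrable lborel (\<lambda>z. indicator {..<x} z *\<^sub>R vv z)"
  proof (rule Bochner_Integration.integrable_bound)
    show "integrable lborel (\<lambda>z. psi_hat r \<rho> m \<sigma> x * speed_dens \<rho> m \<sigma> z)"
      using sd_int by (rule integrable_mult_right)
    show "(\<lambda>z. indicator {..<x} z *\<^sub>R vv z) \<in> borel_measurable lborel" by measurable
    show "AE z in lborel. norm (indicator {..<x} z *\<^sub>R vv z) \<le> norm (psi_hat r \<rho> m \<sigma> x * speed_dens \<rho> m \<sigma> z)"
    proof (rule AE_I2)
      fix z
      have "indicator {..<x} z * vv z \<le> psi_hat r \<rho> m \<sigma> x * speed_dens \<rho> m \<sigma> z"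
      proof (cases "z < x")
        case True
        then have "psi_hat r \<rho> m \<sigma> z \<le> psi_hat r \<rho> m \<sigma> x" using psi_le by auto
        then show ?thesis using True sd_pos[of z] by (simp add: mult.commute)
      next
        case False
        then show ?thesis using sd_pos[of z] psi_pos[of x] by simp
      qed
      then show "norm (indicator {..<x} z *\<^sub>R vv z) \<le> norm (psi_hat r \<rho> m \<sigma> x * speed_dens \<rho> m \<sigma> z)"
        using vv_pos[of z] sd_pos[of z] psi_pos[of x] by (simp add: indicator_def)
    qed
  qed
  then show ?thesis by (simp add: interval_lebesgue_integrable_def set_integrable_def ei)
qed

lemma ratio: "z1 < z2 \<Longrightarrow> vv z1 * ww z2 < vv z2 * ww z1"
proof -
  assume z: "z1 < z2"
  have "psi_hat r \<rho> m \<sigma> z1 * phi_hat r \<rho> m \<sigma> z2 < psi_hat r \<rho> m \<sigma> z2 * phi_hat r \<rho> m \<sigma> z1"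
    using psi_mono[OF z] phi_anti[OF z] psi_pos[of z1] phi_pos[of z2]
    by (intro mult_strict_mono) auto
  then have "(speed_dens \<rho> m \<sigma> z1 * speed_dens \<rho> m \<sigma> z2) * (psi_hat r \<rho> m \<sigma> z1 * phi_hat r \<rho> m \<sigma> z2)
     < (speed_dens \<rho> m \<sigma> z1 * speed_dens \<rho> m \<sigma> z2) * (psi_hat r \<rho> m \<sigma> z2 * phi_hat r \<rho> m \<sigma> z1)"
    using sd_pos[of z1] sd_pos[of z2] by (intro mult_strict_left_mono) auto
  then show ?thesis by (simp add: algebra_simps)
qed

lemma opt_G:
  assumes "opt_boundaries r \<rho> m \<sigma> \<theta> c1 c2 a b"
  shows "a < b \<and> a < \<theta> - (r + \<rho>) * c1 \<and> \<theta> + (r + \<rho>) * c2 < b \<and>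
    G1 ww (\<theta> - (r + \<rho>) * c1) (\<theta> + (r + \<rho>) * c2) a b = 0 \<and>
    G2 vv (\<theta> - (r + \<rho>) * c1) (\<theta> + (r + \<rho>) * c2) a b = 0"
proof -
  have f1: "(\<lambda>z. (z - \<theta> + (r + \<rho>) * c1) * speed_dens \<rho> m \<sigma> z * phi_hat r \<rho> m \<sigma> z) = (\<lambda>z. (z - (\<theta> - (r + \<rho>) * c1)) * ww z)"
    by (auto simp: algebra_simps)
  have f2: "(\<lambda>z. (z - \<theta> - (r + \<rho>) * c2) * speed_dens \<rho> m \<sigma> z * psi_hat r \<rho> m \<sigma> z) = (\<lambda>z. (z - (\<theta> + (r + \<rho>) * c2)) * vv z)"
    by (auto simp: algebra_simps)
  have q: "\<theta> + (r + \<rho>) * c2 - (\<theta> - (r + \<rho>) * c1) = (r + \<rho>) * (c1 + c2)" by (simp add: algebra_simps)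
  show ?thesis using assms unfolding opt_boundaries_def G1_def G2_def f1 f2 q by (auto simp: algebra_simps)
qed

end

theorem proposition4p3:
  fixes r \<rho> m \<sigma> \<theta> :: real
  assumes "r > 0" and "\<rho> > 0" and "\<sigma> > 0"
  shows "(\<forall>c1 c1' c2 a b a' b'.
            c1 < c1' \<and> c1 + c2 > 0 \<and>
            opt_boundaries r \<rho> m \<sigma> \<theta> c1 c2 a b \<and>
            opt_boundaries r \<rho> m \<sigma> \<theta> c1' c2 a' b'
            \<longrightarrow> a' \<le> a \<and> b \<le> b') \<and>
         (\<forall>c1 c2 c2' a b a' b'.
            c2 < c2' \<and> c1 + c2 > 0 \<and>
            opt_boundaries r \<rho> m \<sigma> \<theta> c1 c2 a b \<and>
            opt_boundaries r \<rho> m \<sigma> \<theta> c1 c2' a' b'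
            \<longrightarrow> a' \<le> a \<and> b \<le> b')"
proof -
  note A = assms
  define W where "W = (\<lambda>z. speed_dens \<rho> m \<sigma> z * phi_hat r \<rho> m \<sigma> z)"
  define V where "V = (\<lambda>z. speed_dens \<rho> m \<sigma> z * psi_hat r \<rho> m \<sigma> z)"
  have wM: "W \<in> borel_measurable borel" unfolding W_def by (rule ww_meas[OF A])
  have vM: "V \<in> borel_measurable borel" unfolding V_def by (rule vv_meas[OF A])
  have wpos: "\<And>z. W z > 0" unfolding W_def by (rule ww_pos[OF A])
  have vpos: "\<And>z. V z > 0" unfolding V_def by (rule vv_pos[OF A])
  have wB: "\<And>x y. x \<le> y \<Longrightarrow> \<exists>B. \<forall>z. x \<le> z \<and> z \<le> y \<longrightarrow> \<bar>W z\<bar> \<le> B" unfolding W_def by (rule ww_B[OF A])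
  have vB: "\<And>x y. x \<le> y \<Longrightarrow> \<exists>B. \<forall>z. x \<le> z \<and> z \<le> y \<longrightarrow> \<bar>V z\<bar> \<le> B" unfolding V_def by (rule vv_B[OF A])
  have wT: "\<And>x. interval_lebesgue_integrable lborel (ereal x) \<infinity> W" unfolding W_def by (rule ww_T[OF A])
  have vT: "\<And>x. interval_lebesgue_integrable lborel (-\<infinity>) (ereal x) V" unfolding V_def by (rule vv_T[OF A])
  have rat: "\<And>z1 z2. z1 < z2 \<Longrightarrow> V z1 * W z2 < V z2 * W z1" unfolding V_def W_def by (rule ratio[OF A])
  have LIw: "\<And>x y. interval_lebesgue_integrable lborel (ereal x) (ereal y) (\<lambda>z. (z - c) * W z)" for c
    by (rule ii_loc) (use wM in measurable, rule lb_lin[OF wB])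
  have LIv: "\<And>x y. interval_lebesgue_integrable lborel (ereal x) (ereal y) (\<lambda>z. (z - c) * V z)" for c
    by (rule ii_loc) (use vM in measurable, rule lb_lin[OF vB])
  have LIw0: "\<And>x y. interval_lebesgue_integrable lborel (ereal x) (ereal y) W" by (rule ii_loc[OF wM wB])
  have LIv0: "\<And>x y. interval_lebesgue_integrable lborel (ereal x) (ereal y) V" by (rule ii_loc[OF vM vB])
  have wnn: "\<And>z. W z \<ge> 0" using wpos less_imp_le by blast
  have vnn: "\<And>z. V z \<ge> 0" using vpos less_imp_le by blast
  have optG: "a < b \<and> a < \<theta> - (r + \<rho>) * c1 \<and> \<theta> + (r + \<rho>) * c2 < b \<and>
    G1 W (\<theta> - (r + \<rho>) * c1) (\<theta> + (r + \<rho>) * c2) a b = 0 \<and>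
    G2 V (\<theta> - (r + \<rho>) * c1) (\<theta> + (r + \<rho>) * c2) a b = 0"
    if "opt_boundaries r \<rho> m \<sigma> \<theta> c1 c2 a b" for c1 c2 a b
    unfolding W_def V_def by (rule opt_G[OF A that])
  have k: "r + \<rho> > 0" using A by simp
  show ?thesis
  proof (rule conjI; intro allI impI)
    fix c1 c1' c2 a b a' b'
    assume H: "c1 < c1' \<and> c1 + c2 > 0 \<and> opt_boundaries r \<rho> m \<sigma> \<theta> c1 c2 a b \<and> opt_boundaries r \<rho> m \<sigma> \<theta> c1' c2 a' b'"
    define p where "p = \<theta> - (r + \<rho>) * c1"
    define p' where "p' = \<theta> - (r + \<rho>) * c1'"
    define q where "q = \<theta> + (r + \<rho>) * c2"
    have o1: "a < b \<and> a < p \<and> q < b \<and> G1 W p q a b = 0 \<and> G2 V p q a b = 0"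
      unfolding p_def q_def using optG H by blast
    have o2: "a' < b' \<and> a' < p' \<and> q < b' \<and> G1 W p' q a' b' = 0 \<and> G2 V p' q a' b' = 0"
      unfolding p'_def q_def using optG H by blast
    have pp: "p' < p" unfolding p_def p'_def using H k by simp
    have pq: "p < q" unfolding p_def q_def using H k
      using mult_pos_pos[OF k, of "c1 + c2"] by (simp add: algebra_simps)
    have "G1 W p q a' b' \<le> G1 W p' q a' b'"
      by (rule G1_p[OF LIw0 LIw wnn]) (use pp o2 in auto)
    then have g1: "G1 W p q a' b' \<le> 0" using o2 by simp
    have "G2 V p' q a' b' \<le> G2 V p q a' b'"
      by (rule G2_p[OF vnn]) (use pp in auto)
    then have g2: "G2 V p q a' b' \<ge> 0" using o2 by simp
    show "a' \<le> a \<and> b \<le> b'"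
      using core_compare[of W V p q a a' b b', OF wM vM wpos vpos wB vB wT vT rat pq] o1 o2 pp g1 g2 by auto
  next
    fix c1 c2 c2' a b a' b'
    assume H: "c2 < c2' \<and> c1 + c2 > 0 \<and> opt_boundaries r \<rho> m \<sigma> \<theta> c1 c2 a b \<and> opt_boundaries r \<rho> m \<sigma> \<theta> c1 c2' a' b'"
    define p where "p = \<theta> - (r + \<rho>) * c1"
    define q where "q = \<theta> + (r + \<rho>) * c2"
    define q' where "q' = \<theta> + (r + \<rho>) * c2'"
    have o1: "a < b \<and> a < p \<and> q < b \<and> G1 W p q a b = 0 \<and> G2 V p q a b = 0"
      unfolding p_def q_def using optG H by blast
    have o2: "a' < b' \<and> a' < p \<and> q' < b' \<and> G1 W p q' a' b' = 0 \<and> G2 V p q' a' b' = 0"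
      unfolding p_def q'_def using optG H by blast
    have qq: "q < q'" unfolding q_def q'_def using H k by simp
    have pq: "p < q" unfolding p_def q_def using H k
      using mult_pos_pos[OF k, of "c1 + c2"] by (simp add: algebra_simps)
    have "G1 W p q a' b' \<le> G1 W p q' a' b'"
      by (rule G1_q[OF wnn]) (use qq in auto)
    then have g1: "G1 W p q a' b' \<le> 0" using o2 by simp
    have "G2 V p q' a' b' \<le> G2 V p q a' b'"
      by (rule G2_q[OF LIv0 LIv vnn]) (use qq o2 in auto)
    then have g2: "G2 V p q a' b' \<ge> 0" using o2 by simp
    show "a' \<le> a \<and> b \<le> b'"
      using core_compare[of W V p q a a' b b', OF wM vM wpos vpos wB vB wT vT rat pq] o1 o2 qq g1 g2 by auto
  qed
qed

end
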